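(* Let $\alpha>0$, $\gamma\in(0,1)$ and let $P$ be any distribution on $\mathcal X$. Given data $x_1,\dots,x_n$ with histogram $\theta=(\theta_1,\dots,\theta_k)$, let $S=\{j:\theta_j=0\}$ and define the random vector $Z=(z_1,\dots,z_k)$ by $$z_j=\begin{cases}\theta_j & \text{if } j\in S \text{ and } 2k\le\gamma n,\\ \theta_j+\frac{2}{n\alpha}L_j & \text{otherwise,}\end{cases}$$ where $L_1,\dots,L_k$ are i.i.d. Laplace random variables with mean zero and rate one (density $\tfrac12 e^{-|x|}$), independent of the data. Then this release mechanism is $(\alpha,\gamma)$-randomly differentially private with respect to $P$.
   Context: The sample space $\mathcal X$ is partitioned into $k$ cells $B_1,\dots,B_k$; the histogram of $x_1,\dots,x_n$ is $\theta_j=\frac1n\sum_{i=1}^n\mathbf 1\{x_i\in B_j\}$. A randomized algorithm $Q_n$ assigns to each database $X\in\mathcal X^n$ a distribution $Q_n(\cdot\mid X)$ on an output space (here $\mathbb R^k$). $Q_n$ is $(\alpha,\gamma)$-randomly differentially private (RDP) with respect to $P$ if, with $X_1,\dots,X_{n+1}$ i.i.d. $\sim P$, $X=(X_1,\dots,X_{n-1},X_n)$ and $X'=(X_1,\dots,X_{n-1},X_{n+1})$, $$\mathbb P\Big(\forall \text{ measurable } B:\ e^{-\alpha}\le \tfrac{Q_n(Z\in B\mid X)}{Q_n(Z\in B\mid X')}\le e^\alpha\Big)\ge 1-\gamma,$$ the probability being over $P^{n+1}$. *)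

theory Defs
  imports "HOL-Probability.Probability"
begin

text \<open>Cells B_1..B_k are encoded by a cell-index function cell :: 'a => nat with values in
  {0..<k}: B_(j+1) = {x. cell x = j}.  A database of size n is a function X :: nat => 'a,
  whose entries are X 0, ..., X (n-1).\<close>

definition histogram :: "('a \<Rightarrow> nat) \<Rightarrow> nat \<Rightarrow> (nat \<Rightarrow> 'a) \<Rightarrow> nat \<Rightarrow> real" where
  "histogram cell n X j = real (card {i \<in> {..<n}. cell (X i) = j}) / real n"

definition laplace :: "real measure" where
  "laplace = density lborel (\<lambda>x. ennreal (exp (- \<bar>x\<bar>) / 2))"

text \<open>The release mechanism Q_n(. | X): a distribution on R^k, represented as the
  product measure on {..<k} -> real; coordinates are independent.\<close>
definition hist_mech ::
  "('a \<Rightarrow> nat) \<Rightarrow> nat \<Rightarrow> nat \<Rightarrow> real \<Rightarrow> real \<Rightarrow> (nat \<Rightarrow> 'a) \<Rightarrow> (nat \<Rightarrow> real) measure" where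
  "hist_mech cell k n \<alpha> \<gamma> X =
     PiM {..<k} (\<lambda>j. if histogram cell n X j = 0 \<and> 2 * real k \<le> \<gamma> * real n
                      then return lborel (histogram cell n X j)
                      else distr laplace lborel
                             (\<lambda>l. histogram cell n X j + 2 / (real n * \<alpha>) * l))"

text \<open>(alpha,gamma)-random differential privacy w.r.t. P.  The draw X_1..X_(n+1) is
  omega 0, ..., omega n under P^(n+1); X = (omega 0,...,omega (n-1)) and
  X' = (omega 0,...,omega (n-2), omega n).  The ratio condition is written in multiplicative
  form (0/0 is treated as satisfying the bounds).\<close>
definition RDP ::
  "'a measure \<Rightarrow> nat \<Rightarrow> 'b measure \<Rightarrow> ((nat \<Rightarrow> 'a) \<Rightarrow> 'b measure) \<Rightarrow> real \<Rightarrow> real \<Rightarrow> bool" where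
  "RDP P n Out Q \<alpha> \<gamma> \<longleftrightarrow>
     measure (PiM {..n} (\<lambda>_. P))
       {\<omega> \<in> space (PiM {..n} (\<lambda>_. P)).
          \<forall>B \<in> sets Out.
            exp (- \<alpha>) * measure (Q (restrict (fun_upd \<omega> (n - 1) (\<omega> n)) {..<n})) B
               \<le> measure (Q (restrict \<omega> {..<n})) B \<and>
            measure (Q (restrict \<omega> {..<n})) B
               \<le> exp \<alpha> * measure (Q (restrict (fun_upd \<omega> (n - 1) (\<omega> n)) {..<n})) B}
     \<ge> 1 - \<gamma>"

end

theory Submission
  imports Defs
begin

lemma laplace_sets[simp, measurable_cong]: "sets laplace = sets borel"
  by (simp add: laplace_def)

lemma prob_space_laplace: "prob_space laplace"
proof
  let ?e = "\<lambda>x::real. exponential_density (1::real) x"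
  have pe: "prob_space (density lborel (\<lambda>x. ennreal (?e x)))"
    using prob_space_exponential_density[of 1] by simp
  have i1: "(\<integral>\<^sup>+ x. ennreal (?e x) \<partial>lborel) = 1"
    using prob_space.emeasure_space_1[OF pe] by (simp add: emeasure_density)
  have i2: "(\<integral>\<^sup>+ x. ennreal (?e (- x)) \<partial>lborel) = 1"
  proof -
    have "(\<integral>\<^sup>+ x. ennreal (?e (- x)) \<partial>lborel) = (\<integral>\<^sup>+ x. ennreal (?e x) \<partial>distr lborel borel uminus)"
      by (subst nn_integral_distr) auto
    also have "\<dots> = 1" using i1 by (simp add: lborel_distr_uminus)
    finally show ?thesis .
  qed
  have eq: "ennreal (exp (- \<bar>x\<bar>) / 2) = ennreal (1/2) * ennreal (?e x) + ennreal (1/2) * ennreal (?e (-x))" if "x \<noteq> 0" for x :: real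
  proof -
    have "exp (- \<bar>x\<bar>) / 2 = 1/2 * ?e x + 1/2 * ?e (-x)"
      using that by (auto simp: exponential_density_def)
    then have "ennreal (exp (- \<bar>x\<bar>) / 2) = ennreal (1/2 * ?e x + 1/2 * ?e (-x))"
      by (intro arg_cong[where f=ennreal]) linarith
    also have "\<dots> = ennreal (1/2 * ?e x) + ennreal (1/2 * ?e (-x))"
      by (rule ennreal_plus) (auto simp: exponential_density_def)
    also have "\<dots> = ennreal (1/2) * ennreal (?e x) + ennreal (1/2) * ennreal (?e (-x))"
      by (subst (1 2) ennreal_mult) (auto simp: exponential_density_def)
    finally show ?thesis .
  qed
  have "emeasure laplace (space laplace) = (\<integral>\<^sup>+ x. ennreal (exp (- \<bar>x\<bar>) / 2) \<partial>lborel)"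
    by (simp add: laplace_def emeasure_density)
  also have "\<dots> = (\<integral>\<^sup>+ x. ennreal (1/2) * ennreal (?e x) + ennreal (1/2) * ennreal (?e (-x)) \<partial>lborel)"
    by (intro nn_integral_cong_AE eventually_mono[OF AE_lborel_singleton[of 0]]) (simp add: eq)
  also have "\<dots> = ennreal (1/2) * 1 + ennreal (1/2) * 1"
    by (subst nn_integral_add) (auto simp: nn_integral_cmult i1 i2)
  also have "\<dots> = 1" by (simp only: mult_1_right ennreal_plus[symmetric, of "1/2" "1/2"]) simp
  finally show "emeasure laplace (space laplace) = 1" .
qed

lemma laplace_shift:
  assumes s: "s > 0"
  shows "distr laplace lborel (\<lambda>l. a + s * l) = density lborel (\<lambda>x. ennreal (exp (- \<bar>x - a\<bar> / s) / (2 * s)))"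
proof -
  interpret prob_space laplace by (rule prob_space_laplace)
  let ?f = "\<lambda>x::real. ennreal (exp (- \<bar>x\<bar>) / 2)"
  have d: "distributed laplace lborel (\<lambda>x. x) ?f"
    unfolding distributed_def
    by (auto simp: distr_id2 laplace_def)
  have "distributed laplace lborel (\<lambda>x. a + s * x) (\<lambda>x. ?f ((x - a) / s) / ennreal \<bar>s\<bar>)"
    using distributed_affine[OF d, of s a] s by simp
  then have "distr laplace lborel (\<lambda>x. a + s * x) = density lborel (\<lambda>x. ?f ((x - a) / s) / ennreal \<bar>s\<bar>)"
    by (simp add: distributed_def)
  also have "\<dots> = density lborel (\<lambda>x. ennreal (exp (- \<bar>x - a\<bar> / s) / (2 * s)))"
  proof (intro density_cong)
    show "AE x in lborel. ?f ((x - a) / s) / ennreal \<bar>s\<bar> = ennreal (exp (- \<bar>x - a\<bar> / s) / (2 * s))"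
    proof (intro AE_I2)
      fix x
      have "?f ((x - a) / s) / ennreal \<bar>s\<bar> = ennreal (exp (- \<bar>(x - a) / s\<bar>) / 2 / s)"
        using s by (subst divide_ennreal) auto
      also have "\<dots> = ennreal (exp (- \<bar>x - a\<bar> / s) / (2 * s))"
        using s by (simp add: abs_divide)
      finally show "?f ((x - a) / s) / ennreal \<bar>s\<bar> = ennreal (exp (- \<bar>x - a\<bar> / s) / (2 * s))" .
    qed
  qed auto
  finally show ?thesis .
qed

lemma laplace_ratio:
  assumes s: "s > 0"
  shows "density (distr laplace lborel (\<lambda>l. a + s * l)) (\<lambda>x. ennreal (exp ((\<bar>x - a\<bar> - \<bar>x - b\<bar>) / s)))
     = distr laplace lborel (\<lambda>l. b + s * l)"
  unfolding laplace_shift[OF s]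
  apply (subst density_density_eq)
    apply simp
   apply simp
  apply (intro density_cong)
    apply simp
   apply simp
  apply (intro AE_I2)
  apply (subst ennreal_mult[symmetric])
    apply (simp add: s less_imp_le)
   apply simp
  apply (intro arg_cong[where f=ennreal])
  apply (simp add: field_simps flip: exp_add)
  apply (simp add: diff_divide_distrib)
  done

lemma PiM_density:
  assumes I: "finite I" and M: "\<And>i. prob_space (M i)"
    and N: "\<And>i. prob_space (density (M i) (h i))"
    and h[measurable]: "\<And>i. h i \<in> borel_measurable (M i)"
  shows "PiM I (\<lambda>i. density (M i) (h i)) = density (PiM I M) (\<lambda>x. \<Prod>i\<in>I. h i (x i))"
proof -
  interpret M: product_prob_space M by (rule product_prob_spaceI[OF M])
  interpret N: product_prob_space "\<lambda>i. density (M i) (h i)" by (rule product_prob_spaceI[OF N])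
  have Hm: "(\<lambda>x. \<Prod>i\<in>I. h i (x i)) \<in> borel_measurable (PiM I M)"
  proof (intro borel_measurable_prod_ennreal)
    fix i assume "i \<in> I"
    show "(\<lambda>x. h i (x i)) \<in> borel_measurable (PiM I M)"
      by (rule measurable_compose[OF measurable_component_singleton[OF \<open>i \<in> I\<close>] h])
  qed
  show ?thesis
  proof (rule N.PiM_eqI[symmetric, OF I])
    show "sets (density (PiM I M) (\<lambda>x. \<Prod>i\<in>I. h i (x i))) = sets (PiM I (\<lambda>i. density (M i) (h i)))"
      by (simp only: sets_density) (rule sets_PiM_cong; simp)
  next
    fix A assume A: "\<And>i. i \<in> I \<Longrightarrow> A i \<in> sets (density (M i) (h i))"
    then have A': "\<And>i. i \<in> I \<Longrightarrow> A i \<in> sets (M i)" by simp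
    have PA: "Pi\<^sub>E I A \<in> sets (PiM I M)" using A' I by (simp add: sets_PiM_I_finite)
    have "emeasure (density (PiM I M) (\<lambda>x. \<Prod>i\<in>I. h i (x i))) (Pi\<^sub>E I A)
        = (\<integral>\<^sup>+ x. (\<Prod>i\<in>I. h i (x i)) * indicator (Pi\<^sub>E I A) x \<partial>PiM I M)"
      using Hm PA by (rule emeasure_density)
    also have "\<dots> = (\<integral>\<^sup>+ x. (\<Prod>i\<in>I. h i (x i) * indicator (A i) (x i)) \<partial>PiM I M)"
    proof (intro nn_integral_cong)
      fix x assume x: "x \<in> space (PiM I M)"
      then have ext: "x \<in> extensional I" by (simp add: space_PiM PiE_def)
      show "(\<Prod>i\<in>I. h i (x i)) * indicator (Pi\<^sub>E I A) x = (\<Prod>i\<in>I. h i (x i) * indicator (A i) (x i))"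
      proof (cases "\<forall>i\<in>I. x i \<in> A i")
        case True
        then have "x \<in> Pi\<^sub>E I A" using ext by (auto simp: PiE_def)
        then show ?thesis using True by (simp add: indicator_def)
      next
        case False
        then obtain i where i: "i \<in> I" "x i \<notin> A i" by auto
        then have "x \<notin> Pi\<^sub>E I A" by auto
        moreover have "(\<Prod>i\<in>I. h i (x i) * indicator (A i) (x i)) = 0"
          using i I by (intro prod_zero) (auto intro!: bexI[of _ i])
        ultimately show ?thesis by simp
      qed
    qed
    also have "\<dots> = (\<Prod>i\<in>I. \<integral>\<^sup>+ y. h i y * indicator (A i) y \<partial>M i)"
      using A' by (intro M.product_nn_integral_prod[OF I] borel_measurable_times_ennreal h borel_measurable_indicator)
    also have "\<dots> = (\<Prod>i\<in>I. emeasure (density (M i) (h i)) (A i))"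
      using A' by (intro prod.cong refl) (simp add: emeasure_density)
    finally show "emeasure (density (PiM I M) (\<lambda>x. \<Prod>i\<in>I. h i (x i))) (Pi\<^sub>E I A)
        = (\<Prod>i\<in>I. emeasure (density (M i) (h i)) (A i))" .
  qed
qed

definition mechj :: "real \<Rightarrow> bool \<Rightarrow> real \<Rightarrow> real measure" where
  "mechj s t v = (if v = 0 \<and> t then return lborel v else distr laplace lborel (\<lambda>l. v + s * l))"

lemma sets_mechj[simp, measurable_cong]: "sets (mechj s t v) = sets borel"
  by (simp add: mechj_def)

lemma prob_space_mechj: "prob_space (mechj s t v)"
proof -
  interpret prob_space laplace by (rule prob_space_laplace)
  show ?thesis
    by (auto simp: mechj_def intro!: prob_space_return prob_space_distr)
qed

lemma one_dir:
  fixes \<theta> \<theta>' :: "nat \<Rightarrow> real"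
  assumes s: "s > 0"
    and cond: "\<And>j. j < k \<Longrightarrow> \<theta> j \<noteq> \<theta>' j \<Longrightarrow> \<not> (\<theta> j = 0 \<and> t) \<and> \<not> (\<theta>' j = 0 \<and> t) \<and> \<bar>\<theta> j - \<theta>' j\<bar> \<le> d"
    and card: "real (card {j\<in>{..<k}. \<theta> j \<noteq> \<theta>' j}) * (d / s) \<le> \<alpha>"
    and B: "B \<in> sets (PiM {..<k} (\<lambda>_. lborel))"
  shows "measure (PiM {..<k} (\<lambda>j. mechj s t (\<theta>' j))) B \<le> exp \<alpha> * measure (PiM {..<k} (\<lambda>j. mechj s t (\<theta> j))) B"
proof -
  define D where "D = {j\<in>{..<k}. \<theta> j \<noteq> \<theta>' j}"
  define e where "e j x = (if j \<in> D then (\<bar>x - \<theta> j\<bar> - \<bar>x - \<theta>' j\<bar>) / s else 0)" for j x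
  define h where "h j x = ennreal (exp (e j x))" for j x
  let ?M = "\<lambda>j. mechj s t (\<theta> j)"
  let ?N = "\<lambda>j. mechj s t (\<theta>' j)"
  have hm: "h j \<in> borel_measurable (?M j)" for j
    unfolding h_def[abs_def] e_def[abs_def] by (subst measurable_cong_sets[OF sets_mechj refl]) measurable
  have dens: "density (?M j) (h j) = (if j < k then ?N j else ?M j)" for j
  proof (cases "j \<in> D")
    case True
    then have jk: "j < k" and ne: "\<theta> j \<noteq> \<theta>' j" by (auto simp: D_def)
    from cond[OF jk ne] have "?M j = distr laplace lborel (\<lambda>l. \<theta> j + s * l)"
      "?N j = distr laplace lborel (\<lambda>l. \<theta>' j + s * l)"
      by (auto simp: mechj_def)
    moreover have "h j = (\<lambda>x. ennreal (exp ((\<bar>x - \<theta> j\<bar> - \<bar>x - \<theta>' j\<bar>) / s)))"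
      using True by (simp add: h_def e_def fun_eq_iff)
    ultimately show ?thesis using laplace_ratio[OF s] jk by simp
  next
    case False
    then have "h j = (\<lambda>_. 1)" by (simp add: h_def e_def fun_eq_iff)
    moreover have "j < k \<Longrightarrow> \<theta> j = \<theta>' j" using False by (auto simp: D_def)
    ultimately show ?thesis by (simp add: density_1)
  qed
  have pN: "prob_space (density (?M j) (h j))" for j
    by (simp add: dens prob_space_mechj)
  have eqN: "PiM {..<k} ?N = density (PiM {..<k} ?M) (\<lambda>x. \<Prod>j\<in>{..<k}. h j (x j))"
  proof -
    have "PiM {..<k} ?N = PiM {..<k} (\<lambda>j. density (?M j) (h j))"
      by (rule PiM_cong) (auto simp: dens)
    also have "\<dots> = density (PiM {..<k} ?M) (\<lambda>x. \<Prod>j\<in>{..<k}. h j (x j))"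
      by (rule PiM_density[OF _ prob_space_mechj pN hm]) simp
    finally show ?thesis .
  qed
  have Hm: "(\<lambda>x. \<Prod>j\<in>{..<k}. h j (x j)) \<in> borel_measurable (PiM {..<k} ?M)"
  proof (intro borel_measurable_prod_ennreal)
    fix i assume "i \<in> {..<k}"
    show "(\<lambda>x. h i (x i)) \<in> borel_measurable (PiM {..<k} ?M)"
      by (rule measurable_compose[OF measurable_component_singleton[OF \<open>i \<in> {..<k}\<close>] hm])
  qed
  have BM: "B \<in> sets (PiM {..<k} ?M)"
    using B by (subst sets_PiM_cong[OF refl]) auto
  have Hle: "(\<Prod>j\<in>{..<k}. h j (x j)) \<le> ennreal (exp \<alpha>)" for x
  proof -
    have "(\<Prod>j\<in>{..<k}. h j (x j)) = ennreal (\<Prod>j\<in>{..<k}. exp (e j (x j)))"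
      unfolding h_def by (rule prod_ennreal) simp
    also have "(\<Prod>j\<in>{..<k}. exp (e j (x j))) = exp (\<Sum>j\<in>{..<k}. e j (x j))"
      by (simp add: exp_sum)
    also have "(\<Sum>j\<in>{..<k}. e j (x j)) \<le> (\<Sum>j\<in>{..<k}. if j \<in> D then d / s else 0)"
    proof (intro sum_mono)
      fix j assume j: "j \<in> {..<k}"
      show "e j (x j) \<le> (if j \<in> D then d / s else 0)"
      proof (cases "j \<in> D")
        case True
        then have "\<bar>\<theta> j - \<theta>' j\<bar> \<le> d" using cond by (auto simp: D_def)
        moreover have "\<bar>x j - \<theta> j\<bar> - \<bar>x j - \<theta>' j\<bar> \<le> \<bar>\<theta> j - \<theta>' j\<bar>" by linarith
        ultimately show ?thesis using True s by (simp add: e_def divide_right_mono)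
      qed (simp add: e_def)
    qed
    also have "(\<Sum>j\<in>{..<k}. if j \<in> D then d / s else 0) = real (card D) * (d / s)"
      by (simp add: sum.If_cases D_def Int_def)
    also have "\<dots> \<le> \<alpha>" using card by (simp add: D_def)
    finally show ?thesis by simp
  qed
  interpret Mp: prob_space "PiM {..<k} ?M" by (rule prob_space_PiM[OF prob_space_mechj])
  interpret Np: prob_space "PiM {..<k} ?N" by (rule prob_space_PiM[OF prob_space_mechj])
  have "ennreal (measure (PiM {..<k} ?N) B) = emeasure (PiM {..<k} ?N) B"
    by (rule Np.emeasure_eq_measure[symmetric])
  also have "\<dots> = (\<integral>\<^sup>+ x. (\<Prod>j\<in>{..<k}. h j (x j)) * indicator B x \<partial>PiM {..<k} ?M)"
    unfolding eqN using Hm BM by (rule emeasure_density)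
  also have "\<dots> \<le> (\<integral>\<^sup>+ x. ennreal (exp \<alpha>) * indicator B x \<partial>PiM {..<k} ?M)"
    by (intro nn_integral_mono mult_right_mono Hle) simp
  also have "\<dots> = ennreal (exp \<alpha>) * emeasure (PiM {..<k} ?M) B"
    using BM by (simp add: nn_integral_cmult_indicator)
  also have "\<dots> = ennreal (exp \<alpha> * measure (PiM {..<k} ?M) B)"
    by (simp add: Mp.emeasure_eq_measure ennreal_mult)
  finally show ?thesis
    by (simp add: ennreal_le_iff)
qed

definition hist :: "nat \<Rightarrow> (nat \<Rightarrow> nat) \<Rightarrow> nat \<Rightarrow> real" where
  "hist n c j = real (card {i\<in>{..<n}. c i = j}) / real n"

lemma hist_mech_eq:
  "hist_mech cell k n \<alpha> \<gamma> X = PiM {..<k} (\<lambda>j. mechj (2 / (real n * \<alpha>)) (2 * real k \<le> \<gamma> * real n) (hist n (\<lambda>i. cell (X i)) j))"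
proof -
  have h: "histogram cell n X = hist n (\<lambda>i. cell (X i))" by (simp add: fun_eq_iff histogram_def hist_def)
  show ?thesis unfolding hist_mech_def mechj_def h ..
qed

lemma hist_restrict: "hist n (\<lambda>i. cell (restrict f {..<n} i)) = hist n (\<lambda>i. cell (f i))"
proof -
  have "{i\<in>{..<n}. cell (restrict f {..<n} i) = j} = {i\<in>{..<n}. cell (f i) = j}" for j by auto
  then show ?thesis by (simp add: hist_def fun_eq_iff)
qed

lemma hist_split:
  assumes "n \<ge> 1"
  shows "hist n c j = (real (card {i\<in>{..<n-1}. c i = j}) + (if c (n-1) = j then 1 else 0)) / real n"
proof -
  have e: "{i\<in>{..<n}. c i = j} = {i\<in>{..<n-1}. c i = j} \<union> (if c (n-1) = j then {n-1} else {})"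
    using assms by (auto simp: less_Suc_eq) (metis Suc_pred' less_Suc_eq not_less_eq_eq le_less_trans less_one less_numeral_extra(4)  not_less_eq)+
  have "card {i\<in>{..<n}. c i = j} = card {i\<in>{..<n-1}. c i = j} + (if c (n-1) = j then 1 else 0)"
    unfolding e by (subst card_Un_disjoint) auto
  then show ?thesis by (simp add: hist_def)
qed

lemma hist_split':
  assumes "n \<ge> 1"
  shows "hist n (c(n-1 := c n)) j = (real (card {i\<in>{..<n-1}. c i = j}) + (if c n = j then 1 else 0)) / real n"
proof -
  have "{i\<in>{..<n-1}. (c(n-1 := c n)) i = j} = {i\<in>{..<n-1}. c i = j}" by auto
  then show ?thesis using hist_split[OF assms, of "c(n-1 := c n)" j] by simp
qed

definition mech :: "nat \<Rightarrow> real \<Rightarrow> bool \<Rightarrow> (nat \<Rightarrow> real) \<Rightarrow> (nat \<Rightarrow> real) measure" where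
  "mech k s t \<theta> = PiM {..<k} (\<lambda>j. mechj s t (\<theta> j))"

definition Psi :: "nat \<Rightarrow> nat \<Rightarrow> real \<Rightarrow> bool \<Rightarrow> (nat \<Rightarrow> nat) \<Rightarrow> bool" where
  "Psi k n \<alpha> t c \<longleftrightarrow> (\<forall>B \<in> sets (PiM {..<k} (\<lambda>_. lborel :: real measure)).
     exp (- \<alpha>) * measure (mech k (2 / (real n * \<alpha>)) t (hist n (c(n-1 := c n)))) B
        \<le> measure (mech k (2 / (real n * \<alpha>)) t (hist n c)) B \<and>
     measure (mech k (2 / (real n * \<alpha>)) t (hist n c)) B
        \<le> exp \<alpha> * measure (mech k (2 / (real n * \<alpha>)) t (hist n (c(n-1 := c n)))) B)"

lemma good:
  assumes n: "n \<ge> 1" and \<alpha>: "\<alpha> > 0"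
    and g: "t \<longrightarrow> (\<exists>i<n-1. c i = c (n-1)) \<and> (\<exists>i<n-1. c i = c n)"
  shows "Psi k n \<alpha> t c"
proof -
  define \<theta> where "\<theta> = hist n c"
  define \<theta>' where "\<theta>' = hist n (c(n-1 := c n))"
  define s where "s = 2 / (real n * \<alpha>)"
  have s: "s > 0" using n \<alpha> by (simp add: s_def)
  have np: "real n > 0" using n by simp
  have th: "\<theta> j = (real (card {i\<in>{..<n-1}. c i = j}) + (if c (n-1) = j then 1 else 0)) / real n" for j
    unfolding \<theta>_def by (rule hist_split[OF n])
  have th': "\<theta>' j = (real (card {i\<in>{..<n-1}. c i = j}) + (if c n = j then 1 else 0)) / real n" for j
    unfolding \<theta>'_def by (rule hist_split'[OF n])
  have diff: "\<theta> j \<noteq> \<theta>' j \<Longrightarrow> j = c (n-1) \<or> j = c n" for j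
    unfolding th th' by (auto split: if_splits)
  have absd: "\<bar>\<theta> j - \<theta>' j\<bar> \<le> 1 / real n" for j
  proof -
    have "\<theta> j - \<theta>' j = ((if c (n-1) = j then 1 else 0) - (if c n = j then 1 else 0)) / real n"
      unfolding th th' by (simp add: diff_divide_distrib[symmetric])
    then show ?thesis using np by (simp add: abs_divide)
  qed
  have pos: "\<theta> j \<noteq> 0 \<and> \<theta>' j \<noteq> 0" if "\<exists>i<n-1. c i = j" for j
  proof -
    from that obtain i where "i < n-1" "c i = j" by auto
    then have "card {i\<in>{..<n-1}. c i = j} \<noteq> 0" by (auto simp: card_eq_0_iff)
    then show ?thesis unfolding th th' using np by auto
  qed
  have cardD: "card {j\<in>{..<k}. \<theta> j \<noteq> \<theta>' j} \<le> 2"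
  proof -
    have "card {j\<in>{..<k}. \<theta> j \<noteq> \<theta>' j} \<le> card {c (n-1), c n}"
      using diff by (intro card_mono) auto
    also have "\<dots> \<le> 2" by (simp add: card_insert_if)
    finally show ?thesis .
  qed
  have ds: "(1 / real n) / s = \<alpha> / 2" using np \<alpha> by (simp add: s_def field_simps)
  have cardb: "real (card {j\<in>{..<k}. \<theta> j \<noteq> \<theta>' j}) * ((1 / real n) / s) \<le> \<alpha>"
  proof -
    have "real (card {j\<in>{..<k}. \<theta> j \<noteq> \<theta>' j}) \<le> 2" using cardD by simp
    then have "real (card {j\<in>{..<k}. \<theta> j \<noteq> \<theta>' j}) * (\<alpha> / 2) \<le> 2 * (\<alpha> / 2)"
      using \<alpha> by (intro mult_right_mono) auto
    then show ?thesis unfolding ds by simp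
  qed
  have cond: "\<not> (\<theta> j = 0 \<and> t) \<and> \<not> (\<theta>' j = 0 \<and> t) \<and> \<bar>\<theta> j - \<theta>' j\<bar> \<le> 1 / real n" if "\<theta> j \<noteq> \<theta>' j" for j
  proof -
    have "t \<Longrightarrow> \<theta> j \<noteq> 0 \<and> \<theta>' j \<noteq> 0"
    proof -
      assume t
      with g have "\<exists>i<n-1. c i = j" using diff[OF that] by auto
      then show ?thesis by (rule pos)
    qed
    then show ?thesis using absd[of j] by auto
  qed
  have cond': "\<not> (\<theta>' j = 0 \<and> t) \<and> \<not> (\<theta> j = 0 \<and> t) \<and> \<bar>\<theta>' j - \<theta> j\<bar> \<le> 1 / real n" if "\<theta>' j \<noteq> \<theta> j" for j
    using cond[of j] that by (auto simp: abs_minus_commute)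
  have cardb': "real (card {j\<in>{..<k}. \<theta>' j \<noteq> \<theta> j}) * ((1 / real n) / s) \<le> \<alpha>"
  proof -
    have "{j\<in>{..<k}. \<theta>' j \<noteq> \<theta> j} = {j\<in>{..<k}. \<theta> j \<noteq> \<theta>' j}" by auto
    then show ?thesis using cardb by simp
  qed
  show ?thesis unfolding Psi_def
  proof (intro ballI conjI)
    fix B assume B: "B \<in> sets (PiM {..<k} (\<lambda>_. lborel :: real measure))"
    have 1: "measure (mech k s t \<theta>') B \<le> exp \<alpha> * measure (mech k s t \<theta>) B"
      unfolding mech_def by (rule one_dir[OF s cond cardb B])
    have 2: "measure (mech k s t \<theta>) B \<le> exp \<alpha> * measure (mech k s t \<theta>') B"
      unfolding mech_def by (rule one_dir[OF s cond' cardb' B])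
    from 1 have "exp (- \<alpha>) * measure (mech k s t \<theta>') B \<le> exp (-\<alpha>) * (exp \<alpha> * measure (mech k s t \<theta>) B)"
      by (intro mult_left_mono) auto
    also have "\<dots> = measure (mech k s t \<theta>) B" by (simp add: exp_minus field_simps)
    finally show "exp (- \<alpha>) * measure (mech k (2 / (real n * \<alpha>)) t (hist n (c(n - 1 := c n)))) B
        \<le> measure (mech k (2 / (real n * \<alpha>)) t (hist n c)) B"
      by (simp add: s_def \<theta>_def \<theta>'_def)
    show "measure (mech k (2 / (real n * \<alpha>)) t (hist n c)) B
        \<le> exp \<alpha> * measure (mech k (2 / (real n * \<alpha>)) t (hist n (c(n - 1 := c n)))) B"
      using 2 by (simp add: s_def \<theta>_def \<theta>'_def)
  qed
qed

lemma pq_bound: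
  fixes p :: real and m :: nat
  assumes p: "0 \<le> p" "p \<le> 1" and m: "m \<ge> 1"
  shows "p * (1 - p) ^ m \<le> 1 / real (m + 1)"
proof -
  have "1 - p \<le> exp (- p)" using exp_ge_add_one_self[of "-p"] by simp
  then have "(1 - p) ^ m \<le> exp (- p) ^ m" using p by (intro power_mono) auto
  also have "\<dots> = exp (- (real m * p))" by (simp add: exp_of_nat_mult[symmetric])
  finally have 1: "p * (1 - p) ^ m \<le> p * exp (- (real m * p))" using p by (intro mult_left_mono) auto
  have "real m * p \<le> exp (real m * p - 1)" using exp_ge_add_one_self[of "real m * p - 1"] by simp
  also have "\<dots> = exp (real m * p) / exp 1" by (simp add: exp_diff)
  finally have "real m * p * exp 1 \<le> exp (real m * p)" by (simp add: field_simps)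
  then have "real m * p * exp 1 * exp (- (real m * p)) \<le> 1"
    by (simp add: exp_minus field_simps)
  moreover have "exp 1 \<ge> (2::real)" using exp_ge_add_one_self[of 1] by simp
  ultimately have "real m * p * 2 * exp (- (real m * p)) \<le> 1"
  proof -
    have "real m * p * 2 * exp (- (real m * p)) \<le> real m * p * exp 1 * exp (- (real m * p))"
      using p \<open>exp 1 \<ge> 2\<close> by (intro mult_right_mono mult_left_mono) auto
    then show ?thesis using \<open>real m * p * exp 1 * exp (- (real m * p)) \<le> 1\<close> by linarith
  qed
  then have "p * exp (- (real m * p)) \<le> 1 / (2 * real m)"
    using m by (simp add: field_simps)
  also have "\<dots> \<le> 1 / real (m + 1)" using m by (simp add: frac_le)
  finally show ?thesis using 1 by simp
qed

lemma meas_pattern: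
  fixes cell :: "'a \<Rightarrow> nat" and n :: nat
  assumes cell[measurable]: "cell \<in> P \<rightarrow>\<^sub>M count_space UNIV"
  shows "{\<omega> \<in> space (PiM {..n} (\<lambda>_. P)). Q (\<lambda>i. cell (\<omega> i))} \<in> sets (PiM {..n} (\<lambda>_. P))"
proof -
  define G where "G = {g \<in> {..n} \<rightarrow>\<^sub>E (UNIV :: nat set). Q (\<lambda>i. if i \<le> n then g i else cell undefined)}"
  have cG: "countable G"
  proof (rule countable_subset)
    show "G \<subseteq> {..n} \<rightarrow>\<^sub>E (UNIV :: nat set)" unfolding G_def by auto
    show "countable ({..n} \<rightarrow>\<^sub>E (UNIV :: nat set))" by (rule countable_PiE) auto
  qed
  have piece: "{\<omega> \<in> space (PiM {..n} (\<lambda>_. P)). \<forall>i\<in>{..n}. cell (\<omega> i) = g i} \<in> sets (PiM {..n} (\<lambda>_. P))" for g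
    by measurable
  have eq: "{\<omega> \<in> space (PiM {..n} (\<lambda>_. P)). Q (\<lambda>i. cell (\<omega> i))}
      = (\<Union>g\<in>G. {\<omega> \<in> space (PiM {..n} (\<lambda>_. P)). \<forall>i\<in>{..n}. cell (\<omega> i) = g i})"
  proof (intro set_eqI iffI)
    fix \<omega> assume w: "\<omega> \<in> {\<omega> \<in> space (PiM {..n} (\<lambda>_. P)). Q (\<lambda>i. cell (\<omega> i))}"
    then have sp: "\<omega> \<in> space (PiM {..n} (\<lambda>_. P))" and q: "Q (\<lambda>i. cell (\<omega> i))" by auto
    have und: "i > n \<Longrightarrow> \<omega> i = undefined" for i using sp by (auto simp: space_PiM PiE_def extensional_def)
    have "(\<lambda>i. if i \<le> n then restrict (\<lambda>i. cell (\<omega> i)) {..n} i else cell undefined) = (\<lambda>i. cell (\<omega> i))"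
      using und by (auto simp: fun_eq_iff)
    then have "restrict (\<lambda>i. cell (\<omega> i)) {..n} \<in> G" using q by (simp add: G_def)
    then show "\<omega> \<in> (\<Union>g\<in>G. {\<omega> \<in> space (PiM {..n} (\<lambda>_. P)). \<forall>i\<in>{..n}. cell (\<omega> i) = g i})"
      using sp by (intro UN_I[of "restrict (\<lambda>i. cell (\<omega> i)) {..n}"]) auto
  next
    fix \<omega> assume "\<omega> \<in> (\<Union>g\<in>G. {\<omega> \<in> space (PiM {..n} (\<lambda>_. P)). \<forall>i\<in>{..n}. cell (\<omega> i) = g i})"
    then obtain g where g: "g \<in> G" and sp: "\<omega> \<in> space (PiM {..n} (\<lambda>_. P))"
      and eqg: "\<forall>i\<in>{..n}. cell (\<omega> i) = g i" by auto
    have und: "i > n \<Longrightarrow> \<omega> i = undefined" for i using sp by (auto simp: space_PiM PiE_def extensional_def)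
    have "(\<lambda>i. if i \<le> n then g i else cell undefined) = (\<lambda>i. cell (\<omega> i))"
      using und eqg by (auto simp: fun_eq_iff)
    then show "\<omega> \<in> {\<omega> \<in> space (PiM {..n} (\<lambda>_. P)). Q (\<lambda>i. cell (\<omega> i))}"
      using g sp by (simp add: G_def)
  qed
  show ?thesis unfolding eq
    by (rule sets.countable_UN''[OF cG piece])
qed

lemma bad_bound:
  fixes cell :: "'a \<Rightarrow> nat" and n m k :: nat
  assumes P: "prob_space P" and cell[measurable]: "cell \<in> P \<rightarrow>\<^sub>M count_space UNIV"
    and ck: "\<forall>x\<in>space P. cell x < k" and n: "n \<ge> 2" and m: "m = n - 1 \<or> m = n"
  shows "measure (PiM {..n} (\<lambda>_. P)) {\<omega> \<in> space (PiM {..n} (\<lambda>_. P)). \<forall>i<n-1. cell (\<omega> i) \<noteq> cell (\<omega> m)}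
    \<le> real k / real n"
proof -
  interpret prob_space P by (rule P)
  have pps: "product_prob_space (\<lambda>_. P)" by (rule product_prob_spaceI) (rule P)
  interpret F: finite_product_prob_space "\<lambda>_. P" "{..n}"
    using pps by (auto simp: finite_product_prob_space_def finite_product_sigma_finite_def
        finite_product_sigma_finite_axioms_def product_prob_space_def)
  define E where "E j = {x\<in>space P. cell x = j}" for j
  have E[measurable]: "E j \<in> sets P" for j unfolding E_def by measurable
  define F where "F j i = (if i < n-1 then space P - E j else if i = m then E j else space P)" for j i
  have Fs: "F j i \<in> sets P" for j i unfolding F_def by auto
  let ?A = "{\<omega> \<in> space (PiM {..n} (\<lambda>_. P)). \<forall>i<n-1. cell (\<omega> i) \<noteq> cell (\<omega> m)}"
  have sub: "?A \<subseteq> (\<Union>j\<in>{..<k}. Pi\<^sub>E {..n} (F j))"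
  proof
    fix \<omega> assume w: "\<omega> \<in> ?A"
    then have sp: "\<omega> \<in> Pi\<^sub>E {..n} (\<lambda>_. space P)" by (simp add: space_PiM)
    have mn: "m \<in> {..n}" using m by auto
    then have "\<omega> m \<in> space P" using sp by auto
    then have jk: "cell (\<omega> m) < k" using ck by auto
    have "\<omega> \<in> Pi\<^sub>E {..n} (F (cell (\<omega> m)))"
    proof -
      have "\<omega> i \<in> F (cell (\<omega> m)) i" if i: "i \<in> {..n}" for i
      proof -
        have "\<omega> i \<in> space P" using sp i by auto
        then show ?thesis using w \<open>\<omega> m \<in> space P\<close> by (auto simp: F_def E_def)
      qed
      then show ?thesis using sp by (auto simp: PiE_def)
    qed
    then show "\<omega> \<in> (\<Union>j\<in>{..<k}. Pi\<^sub>E {..n} (F j))" using jk by auto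
  qed
  have PEs: "Pi\<^sub>E {..n} (F j) \<in> sets (PiM {..n} (\<lambda>_. P))" for j
    using Fs by (intro sets_PiM_I_finite) auto
  have "measure (PiM {..n} (\<lambda>_. P)) ?A \<le> measure (PiM {..n} (\<lambda>_. P)) (\<Union>j\<in>{..<k}. Pi\<^sub>E {..n} (F j))"
    using sub PEs by (intro F.finite_measure_mono) auto
  also have "\<dots> \<le> (\<Sum>j\<in>{..<k}. measure (PiM {..n} (\<lambda>_. P)) (Pi\<^sub>E {..n} (F j)))"
    using PEs by (intro measure_UNION_le) auto
  also have "\<dots> \<le> (\<Sum>j\<in>{..<k}. 1 / real n)"
  proof (intro sum_mono)
    fix j
    define p where "p = prob (E j)"
    have p01: "0 \<le> p" "p \<le> 1" by (auto simp: p_def)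
    have "measure (PiM {..n} (\<lambda>_. P)) (Pi\<^sub>E {..n} (F j)) = (\<Prod>i\<in>{..n}. prob (F j i))"
      using Fs by (rule F.prob_times)
    also have "\<dots> = (\<Prod>i\<in>{..<n-1}. prob (F j i)) * (\<Prod>i\<in>{n-1, n}. prob (F j i))"
    proof -
      have "{..n} = {..<n-1} \<union> {n-1, n}" using n by auto
      moreover have "(\<Prod>i\<in>{..<n-1} \<union> {n-1, n}. prob (F j i)) = (\<Prod>i\<in>{..<n-1}. prob (F j i)) * (\<Prod>i\<in>{n-1, n}. prob (F j i))"
        by (rule prod.union_disjoint) auto
      ultimately show ?thesis by simp
    qed
    also have "(\<Prod>i\<in>{..<n-1}. prob (F j i)) = (1 - p) ^ (n - 1)"
    proof -
      have "(\<Prod>i\<in>{..<n-1}. prob (F j i)) = (\<Prod>i\<in>{..<n-1}. 1 - p)"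
        by (intro prod.cong refl) (simp add: F_def p_def prob_compl E)
      then show ?thesis by simp
    qed
    also have "(\<Prod>i\<in>{n-1, n}. prob (F j i)) = p"
      using n m by (auto simp: F_def p_def prob_space)
    finally have "measure (PiM {..n} (\<lambda>_. P)) (Pi\<^sub>E {..n} (F j)) = p * (1 - p) ^ (n - 1)" by simp
    also have "\<dots> \<le> 1 / real (n - 1 + 1)" using p01 n by (intro pq_bound) auto
    also have "\<dots> = 1 / real n" using n by simp
    finally show "measure (PiM {..n} (\<lambda>_. P)) (Pi\<^sub>E {..n} (F j)) \<le> 1 / real n" .
  qed
  also have "\<dots> = real k / real n" by simp
  finally show ?thesis .
qed

theorem proposition5p1:
  fixes P :: "'a measure" and cell :: "'a \<Rightarrow> nat" and k n :: nat and \<alpha> \<gamma> :: real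
  assumes "prob_space P"
    and "cell \<in> P \<rightarrow>\<^sub>M count_space UNIV"
    and "\<forall>x \<in> space P. cell x < k"
    and "n \<ge> 1"
    and "\<alpha> > 0"
    and "0 < \<gamma>" and "\<gamma> < 1"
  shows "RDP P n (PiM {..<k} (\<lambda>_. lborel)) (hist_mech cell k n \<alpha> \<gamma>) \<alpha> \<gamma>"
proof -
  note P = assms(1) and cellm = assms(2) and ck = assms(3) and n = assms(4) and \<alpha> = assms(5)
    and \<gamma> = assms(6,7)
  interpret prob_space P by (rule P)
  let ?PP = "PiM {..n} (\<lambda>_. P)"
  let ?t = "2 * real k \<le> \<gamma> * real n"
  let ?s = "2 / (real n * \<alpha>)"
  interpret PPp: prob_space ?PP by (rule prob_space_PiM) (rule P)
  define S where "S = {\<omega> \<in> space ?PP.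
          \<forall>B \<in> sets (PiM {..<k} (\<lambda>_. lborel :: real measure)).
            exp (- \<alpha>) * measure (hist_mech cell k n \<alpha> \<gamma> (restrict (fun_upd \<omega> (n - 1) (\<omega> n)) {..<n})) B
               \<le> measure (hist_mech cell k n \<alpha> \<gamma> (restrict \<omega> {..<n})) B \<and>
            measure (hist_mech cell k n \<alpha> \<gamma> (restrict \<omega> {..<n})) B
               \<le> exp \<alpha> * measure (hist_mech cell k n \<alpha> \<gamma> (restrict (fun_upd \<omega> (n - 1) (\<omega> n)) {..<n})) B}"
  have h1: "hist_mech cell k n \<alpha> \<gamma> (restrict \<omega> {..<n}) = mech k ?s ?t (hist n (\<lambda>i. cell (\<omega> i)))" for \<omega>
    unfolding hist_mech_eq mech_def hist_restrict ..
  have h2: "hist_mech cell k n \<alpha> \<gamma> (restrict (fun_upd \<omega> (n - 1) (\<omega> n)) {..<n})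
      = mech k ?s ?t (hist n ((\<lambda>i. cell (\<omega> i))(n - 1 := cell (\<omega> n))))" for \<omega>
  proof -
    have "(\<lambda>i. cell (fun_upd \<omega> (n - 1) (\<omega> n) i)) = fun_upd (\<lambda>i. cell (\<omega> i)) (n - 1) (cell (\<omega> n))"
      by (auto simp: fun_eq_iff)
    then show ?thesis unfolding hist_mech_eq mech_def hist_restrict by simp
  qed
  have Seq: "S = {\<omega> \<in> space ?PP. Psi k n \<alpha> ?t (\<lambda>i. cell (\<omega> i))}"
  proof -
    have h3: "(\<lambda>i. cell (fun_upd \<omega> (n - 1) (\<omega> n) i)) = fun_upd (\<lambda>i. cell (\<omega> i)) (n - 1) (cell (\<omega> n))" for \<omega>
      by (auto simp: fun_eq_iff)
    show ?thesis unfolding S_def Psi_def h1 h3 ..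
  qed
  have Sm: "S \<in> sets ?PP" unfolding Seq by (rule meas_pattern[OF cellm])
  have "1 - \<gamma> \<le> measure ?PP S"
  proof (cases ?t)
    case False
    have "S = space ?PP"
    proof -
      have "Psi k n \<alpha> ?t c" for c using False n \<alpha> by (intro good) auto
      then show ?thesis unfolding Seq by auto
    qed
    then show ?thesis using \<gamma> by (simp add: PPp.prob_space)
  next
    case True
    obtain x where "x \<in> space P" using not_empty by blast
    then have k1: "k \<ge> 1" using ck by fastforce
    have n2: "n \<ge> 2"
    proof -
      have "\<gamma> * real n < 1 * real n" using \<gamma> n by (intro mult_strict_right_mono) auto
      then have "2 * real k < real n" using True by linarith
      then show ?thesis using k1 by linarith
    qed
    define A where "A m = {\<omega> \<in> space ?PP. \<forall>i<n-1. cell (\<omega> i) \<noteq> cell (\<omega> m)}" for m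
    have Am: "A m \<in> sets ?PP" for m
      unfolding A_def by (rule meas_pattern[OF cellm, where Q="\<lambda>c. \<forall>i<n-1. c i \<noteq> c m"])
    have Ab: "measure ?PP (A m) \<le> real k / real n" if "m = n - 1 \<or> m = n" for m
      unfolding A_def by (rule bad_bound[OF P cellm ck n2 that])
    have sub: "space ?PP \<subseteq> S \<union> A (n-1) \<union> A n"
    proof
      fix \<omega> assume w: "\<omega> \<in> space ?PP"
      show "\<omega> \<in> S \<union> A (n-1) \<union> A n"
      proof (cases "\<omega> \<in> A (n-1) \<or> \<omega> \<in> A n")
        case False
        then have "(\<exists>i<n-1. cell (\<omega> i) = cell (\<omega> (n-1))) \<and> (\<exists>i<n-1. cell (\<omega> i) = cell (\<omega> n))"
          using w by (auto simp: A_def)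
        then have "Psi k n \<alpha> ?t (\<lambda>i. cell (\<omega> i))" using n \<alpha> by (intro good) auto
        then show ?thesis using w by (simp add: Seq)
      qed auto
    qed
    have "1 = measure ?PP (space ?PP)" by (simp add: PPp.prob_space)
    also have "\<dots> \<le> measure ?PP (S \<union> A (n-1) \<union> A n)"
      using sub Sm Am by (intro PPp.finite_measure_mono) auto
    also have "\<dots> \<le> measure ?PP (S \<union> A (n-1)) + measure ?PP (A n)"
      using Sm Am by (intro measure_Un_le) auto
    also have "\<dots> \<le> measure ?PP S + measure ?PP (A (n-1)) + measure ?PP (A n)"
      using Sm Am measure_Un_le[of S ?PP "A (n-1)"] by auto
    also have "\<dots> \<le> measure ?PP S + real k / real n + real k / real n"
      using Ab[of "n-1"] Ab[of n] by auto
    also have "\<dots> \<le> measure ?PP S + \<gamma>"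
    proof -
      have "2 * real k / real n \<le> \<gamma>" using True n by (simp add: divide_le_eq)
      then show ?thesis by simp
    qed
    finally show ?thesis by simp
  qed
  then show ?thesis unfolding RDP_def S_def .
qed

end
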